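(* For every integer $n\ge 1$ and every real $x$, $$W^{(1)}_{n}(x)=(-2)^{\frac{n(n-1)}{2}}\,\sin^{\frac{n(n+1)}{2}}(x)\,G(n+1)\,2n\cos(x).$$
   Context: For smooth functions $f_1,\dots,f_n$ of a real variable $x$, $\mathrm{Wr}\{f_1,\dots,f_n\}$ denotes the determinant of the $n\times n$ matrix with $(i,j)$ entry $f_j^{(i-1)}(x)$. Define $W^{(1)}_1(x):=\sin(2x)$ and, for $n\ge2$, $W^{(1)}_n(x):=\mathrm{Wr}\{\sin(x),\sin(2x),\dots,\sin((n-1)x),\sin((n+1)x)\}$. Here $G(n+1)=\prod_{j=0}^{n-1}j!$. *)

theory Defs
  imports "HOL-Analysis.Derivative" "Jordan_Normal_Form.Determinant"
begin

definition Wr :: "(real \<Rightarrow> real) list \<Rightarrow> real \<Rightarrow> real" where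
  "Wr fs x = det (mat (length fs) (length fs) (\<lambda>(i, j). (deriv ^^ i) (fs ! j) x))"

definition W1 :: "nat \<Rightarrow> real \<Rightarrow> real" where
  "W1 n x = (if n = 1 then sin (2 * x)
     else Wr (map (\<lambda>k. (\<lambda>t. sin (real k * t))) ([1..<n] @ [n + 1])) x)"

text \<open>Barnes G-function at n+1: G(n+1) = prod_{j=0}^{n-1} j!.\<close>
definition barnesG_succ :: "nat \<Rightarrow> real" where
  "barnesG_succ n = (\<Prod>j<n. fact j)"

end

theory Submission
  imports Defs "HOL-Computational_Algebra.Polynomial"
begin


inductive_set TT :: "(real \<Rightarrow> real) set" where
  TT_const: "(\<lambda>x. c) \<in> TT"
| TT_sin: "sin \<in> TT"
| TT_cos: "cos \<in> TT"
| TT_add: "f \<in> TT \<Longrightarrow> g \<in> TT \<Longrightarrow> (\<lambda>x. f x + g x) \<in> TT"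
| TT_mult: "f \<in> TT \<Longrightarrow> g \<in> TT \<Longrightarrow> (\<lambda>x. f x * g x) \<in> TT"

lemma TT_deriv: "f \<in> TT \<Longrightarrow> (\<forall>x. f differentiable (at x)) \<and> deriv f \<in> TT"
proof (induction rule: TT.induct)
  case (TT_const c)
  then show ?case by (simp add: TT.TT_const)
next
  case TT_sin
  have ds: "deriv (sin::real\<Rightarrow>real) = cos" by (rule ext, rule DERIV_imp_deriv, rule DERIV_sin)
  moreover have "sin differentiable (at x)" for x :: real
  proof -
    have "DERIV sin x :> deriv sin x" unfolding ds by (rule DERIV_sin)
    then show ?thesis using DERIV_deriv_iff_real_differentiable by blast
  qed
  ultimately show ?case using TT.TT_cos ds by simp
next
  case TT_cos
  have dc: "deriv (cos::real\<Rightarrow>real) = (\<lambda>x. (-1) * sin x)" by (rule ext, rule DERIV_imp_deriv) (auto intro!: derivative_eq_intros)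
  have "cos differentiable (at x)" for x :: real
  proof -
    have "DERIV cos x :> deriv cos x" unfolding dc by (auto intro!: derivative_eq_intros)
    then show ?thesis using DERIV_deriv_iff_real_differentiable by blast
  qed
  moreover have "(\<lambda>x. (\<lambda>x. -1) x * sin x) \<in> TT" by (intro TT.intros)
  ultimately show ?case using dc by simp
next
  case (TT_add f g)
  have "deriv (\<lambda>x. f x + g x) = (\<lambda>x. deriv f x + deriv g x)"
    by (rule ext, rule DERIV_imp_deriv) (use TT_add in \<open>auto intro!: derivative_eq_intros simp: DERIV_deriv_iff_real_differentiable\<close>)
  then show ?case using TT_add TT.intros by (auto intro: derivative_intros)
next
  case (TT_mult f g)
  have "deriv (\<lambda>x. f x * g x) = (\<lambda>x. deriv f x * g x + f x * deriv g x)"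
  proof (rule ext, rule DERIV_imp_deriv)
    fix x
    have "DERIV f x :> deriv f x" "DERIV g x :> deriv g x"
      using TT_mult DERIV_deriv_iff_real_differentiable by blast+
    from DERIV_mult[OF this] show "DERIV (\<lambda>x. f x * g x) x :> deriv f x * g x + f x * deriv g x"
      by (simp add: algebra_simps)
  qed
  then show ?case using TT_mult TT.intros by (auto intro: derivative_intros)
qed

lemma TT_DERIV: "f \<in> TT \<Longrightarrow> DERIV f x :> deriv f x"
  using TT_deriv DERIV_deriv_iff_real_differentiable by blast

lemma TT_poly_cos: "(\<lambda>x. poly p (cos x)) \<in> TT"
proof (induction p)
  case 0
  then show ?case using TT_const[of 0] by simp
next
  case (pCons a p)
  have "(\<lambda>x. (\<lambda>x. a) x + (\<lambda>x. cos x * poly p (cos x)) x) \<in> TT"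
    by (intro TT.intros pCons)
  then show ?case by simp
qed

fun AA :: "nat \<Rightarrow> nat \<Rightarrow> real \<Rightarrow> real" where
  "AA 0 l = (if l = 0 then sin else (\<lambda>x. 0))"
| "AA (Suc i) l = (\<lambda>x. deriv (AA i l) x + (if l = 0 then 0 else AA i (l - 1) x * - sin x))"

lemma AA_TT: "AA i l \<in> TT"
proof (induction i arbitrary: l)
  case 0
  then show ?case using TT.intros by simp
next
  case (Suc i)
  have d: "deriv (AA i l) \<in> TT" using TT_deriv Suc by blast
  show ?case
  proof (cases "l = 0")
    case True
    have "(\<lambda>x. deriv (AA i l) x + (\<lambda>x. 0) x) \<in> TT" by (intro TT.intros d)
    then show ?thesis using True by simp
  next
    case False
    have "(\<lambda>x. deriv (AA i l) x + (\<lambda>x. AA i (l - 1) x * ((\<lambda>x. -1) x * sin x)) x) \<in> TT"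
      by (intro TT.intros d Suc)
    then show ?thesis using False by simp
  qed
qed

lemma AA_zero: "l > i \<Longrightarrow> AA i l = (\<lambda>x. 0)"
proof (induction i arbitrary: l)
  case 0
  then show ?case by simp
next
  case (Suc i)
  then show ?case by (auto simp: Suc.IH)
qed

lemma AA_diag: "AA i i x = sin x * (- sin x) ^ i"
proof (induction i arbitrary: x)
  case 0
  then show ?case by simp
next
  case (Suc i)
  then show ?case by (simp add: AA_zero)
qed

lemma main_deriv:
  "(deriv ^^ i) (\<lambda>t. sin t * poly p (cos t)) =
     (\<lambda>x. \<Sum>l\<le>i. AA i l x * poly ((pderiv ^^ l) p) (cos x))"
proof (induction i)
  case 0
  then show ?case by simp
next
  case (Suc i)
  define P where "P l x = poly ((pderiv ^^ l) p) (cos x)" for l x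
  have dP: "DERIV (P l) x :> P (Suc l) x * - sin x" for l x
    unfolding P_def by (auto intro!: derivative_eq_intros)
  have "(deriv ^^ Suc i) (\<lambda>t. sin t * poly p (cos t)) = deriv (\<lambda>x. \<Sum>l\<le>i. AA i l x * P l x)"
    using Suc by (simp add: P_def)
  also have "\<dots> = (\<lambda>x. \<Sum>l\<le>i. deriv (AA i l) x * P l x + AA i l x * (P (Suc l) x * - sin x))"
  proof
    fix x
    show "deriv (\<lambda>x. \<Sum>l\<le>i. AA i l x * P l x) x = (\<Sum>l\<le>i. deriv (AA i l) x * P l x + AA i l x * (P (Suc l) x * - sin x))"
    proof (rule DERIV_imp_deriv)
      show "DERIV (\<lambda>x. \<Sum>l\<le>i. AA i l x * P l x) x :> (\<Sum>l\<le>i. deriv (AA i l) x * P l x + AA i l x * (P (Suc l) x * - sin x))"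
        by (rule DERIV_sum, rule DERIV_cong, rule DERIV_mult[OF TT_DERIV[OF AA_TT] dP], simp)
    qed
  qed
  also have "\<dots> = (\<lambda>x. \<Sum>l\<le>Suc i. AA (Suc i) l x * P l x)"
  proof
    fix x
    have z: "deriv (AA i (Suc i)) x = 0" by (simp add: AA_zero)
    have "(\<Sum>l\<le>Suc i. AA (Suc i) l x * P l x) =
      (\<Sum>l\<le>Suc i. deriv (AA i l) x * P l x) + (\<Sum>l\<le>Suc i. (if l = 0 then 0 else AA i (l - 1) x * - sin x) * P l x)"
      by (simp add: sum.distrib algebra_simps)
    also have "(\<Sum>l\<le>Suc i. deriv (AA i l) x * P l x) = (\<Sum>l\<le>i. deriv (AA i l) x * P l x)"
      using z by simp
    also have "(\<Sum>l\<le>Suc i. (if l = 0 then 0 else AA i (l - 1) x * - sin x) * P l x)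
       = (\<Sum>l\<le>i. AA i l x * (P (Suc l) x * - sin x))"
      by (subst sum.atMost_Suc_shift) (simp add: algebra_simps)
    finally have X: "(\<Sum>l\<le>Suc i. AA (Suc i) l x * P l x) = (\<Sum>l\<le>i. deriv (AA i l) x * P l x) + (\<Sum>l\<le>i. AA i l x * (P (Suc l) x * - sin x))" .
    show "(\<Sum>l\<le>i. deriv (AA i l) x * P l x + AA i l x * (P (Suc l) x * - sin x)) = (\<Sum>l\<le>Suc i. AA (Suc i) l x * P l x)"
      by (simp only: sum.distrib X)
  qed
  finally show ?case by (simp add: P_def)
qed



fun UU :: "nat \<Rightarrow> real poly" where
  "UU 0 = 1"
| "UU (Suc 0) = [:0, 2:]"
| "UU (Suc (Suc k)) = [:0, 2:] * UU (Suc k) - UU k"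

lemma UU_sin: "sin (real (Suc k) * t) = sin t * poly (UU k) (cos t)"
proof (induction k rule: UU.induct)
  case 1
  then show ?case by simp
next
  case 2
  then show ?case by (simp add: sin_double)
next
  case (3 k)
  have e1: "real (Suc (Suc (Suc k))) * t = real (Suc (Suc k)) * t + t" by (simp add: algebra_simps)
  have e2: "real (Suc k) * t = real (Suc (Suc k)) * t - t" by (simp add: algebra_simps)
  have "sin (real (Suc (Suc (Suc k))) * t) = 2 * cos t * sin (real (Suc (Suc k)) * t) - sin (real (Suc k) * t)"
    unfolding e1 e2 sin_add sin_diff by (simp add: algebra_simps)
  then show ?case using 3 by (simp add: algebra_simps)
qed

lemma mult_X2: "[:0, 2:] * p = pCons 0 (smult 2 p)"
  by simp

lemma UU_coeff: "coeff (UU k) k = 2 ^ k \<and> (\<forall>m>k. coeff (UU k) m = 0) \<and> (\<forall>m. odd (k + m) \<longrightarrow> coeff (UU k) m = 0)"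
proof (induction k rule: UU.induct)
  case 1
  then show ?case by (auto simp: coeff_1 elim: oddE)
next
  case 2
  then show ?case by (auto simp: coeff_pCons split: nat.splits)
next
  case (3 k)
  have c: "coeff (UU (Suc (Suc k))) m = (case m of 0 \<Rightarrow> 0 | Suc m' \<Rightarrow> 2 * coeff (UU (Suc k)) m') - coeff (UU k) m" for m
    unfolding UU.simps mult_X2 by (simp add: coeff_pCons split: nat.split)
  show ?case
  proof (intro conjI allI impI)
    show "coeff (UU (Suc (Suc k))) (Suc (Suc k)) = 2 ^ Suc (Suc k)"
      using 3 by (simp add: c)
  next
    fix m assume "m > Suc (Suc k)"
    then show "coeff (UU (Suc (Suc k))) m = 0" unfolding c using 3 by (auto split: nat.splits)
  next
    fix m assume "odd (Suc (Suc k) + m)"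
    then show "coeff (UU (Suc (Suc k))) m = 0" unfolding c using 3 by (auto split: nat.splits)
  qed
qed

lemma higher_pderiv_monom1:
  "(pderiv ^^ l) (monom (1::real) k) = (if l \<le> k then monom (fact k / fact (k - l)) (k - l) else 0)"
proof (induction l)
  case 0
  then show ?case by simp
next
  case (Suc l)
  show ?case
  proof (cases "Suc l \<le> k")
    case True
    have f: "fact (k - l) = real (k - l) * fact (k - Suc l)"
      using True by (metis Suc_diff_le Suc_le_lessD diff_Suc_Suc fact_Suc of_nat_fact zero_less_diff minus_nat.diff_0 Suc_diff_Suc)
    have "(pderiv ^^ Suc l) (monom (1::real) k) = pderiv (monom (fact k / fact (k - l)) (k - l))"
      using Suc True by simp
    also have "\<dots> = monom (fact k / fact (k - Suc l)) (k - Suc l)"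
    proof -
      have nz: "real (k - l) \<noteq> 0" using True by simp
      have g: "real (k - l) * (fact k / fact (k - l)) = fact k / fact (k - Suc l)"
        unfolding f using nz by (simp add: field_simps)
      have h: "k - l - 1 = k - Suc l" by simp
      show ?thesis unfolding pderiv_monom g h by (rule refl)
    qed
    finally show ?thesis using True by simp
  next
    case False
    then show ?thesis using Suc by (auto simp: pderiv_monom)
  qed
qed

lemma poly_higher_pderiv_expand:
  assumes "degree p \<le> d"
  shows "poly ((pderiv ^^ l) p) y = (\<Sum>m\<le>d. coeff p m * poly ((pderiv ^^ l) (monom 1 m)) y)"
proof -
  have "p = (\<Sum>m\<le>d. smult (coeff p m) (monom 1 m))"
    using poly_as_sum_of_monoms'[OF assms] by (simp add: smult_monom)
  then have "poly ((pderiv ^^ l) p) y = poly ((pderiv ^^ l) (\<Sum>m\<le>d. smult (coeff p m) (monom 1 m))) y"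
    by simp
  also have "\<dots> = (\<Sum>m\<le>d. coeff p m * poly ((pderiv ^^ l) (monom 1 m)) y)"
    by (simp add: higher_pderiv_sum higher_pderiv_smult poly_sum)
  finally show ?thesis .
qed



lemma sum_lessThan_id: "(\<Sum>i<n. i) = n * (n - 1) div (2::nat)"
proof (induction n)
  case 0 then show ?case by simp
next
  case (Suc n)
  have "n * (n - 1) div 2 + n = (n * (n - 1) + 2 * n) div 2" by simp
  also have "n * (n - 1) + 2 * n = Suc n * n" by (cases n) (auto simp: algebra_simps)
  finally show ?case using Suc by simp
qed

lemma deriv_mat_factor:
  fixes n :: nat and x :: real
  defines "e \<equiv> (\<lambda>m. if m < n - 1 then m else n)"
  assumes n: "n \<ge> 2"
  shows "Wr (map (\<lambda>k. (\<lambda>t. sin (real k * t))) ([1..<n] @ [n + 1])) x =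
    (\<Prod>i<n. sin x * (- sin x) ^ i) * (\<Prod>m<n. fact (e m) / fact (e m - m) * cos x ^ (e m - m)) * (\<Prod>j<n. 2 ^ e j)"
proof -
  define fs where "fs = map (\<lambda>k. (\<lambda>t. sin (real k * t))) ([1..<n] @ [n + 1])"
  have len: "length fs = n" using n by (simp add: fs_def)
  have fsj: "fs ! j = (\<lambda>t. sin t * poly (UU (e j)) (cos t))" if "j < n" for j
  proof -
    have "fs ! j = (\<lambda>t. sin (real (Suc (e j)) * t))"
      using that n unfolding fs_def e_def by (auto simp: nth_append)
    then show ?thesis by (simp only: UU_sin)
  qed
  define c where "c = cos x"
  define Am where "Am = mat n n (\<lambda>(i,l). AA i l x)"
  define Pm where "Pm = mat n n (\<lambda>(l,j). poly ((pderiv ^^ l) (UU (e j))) c)"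
  define Em where "Em = mat n n (\<lambda>(l,m). poly ((pderiv ^^ l) (monom 1 (e m))) c)"
  define Cm where "Cm = mat n n (\<lambda>(m,j). coeff (UU (e j)) (e m))"
  have carr: "Am \<in> carrier_mat n n" "Pm \<in> carrier_mat n n" "Em \<in> carrier_mat n n" "Cm \<in> carrier_mat n n"
    by (auto simp: Am_def Pm_def Em_def Cm_def)
  have M: "mat n n (\<lambda>(i, j). (deriv ^^ i) (fs ! j) x) = Am * Pm"
  proof (rule eq_matI)
    fix i j assume ij: "i < dim_row (Am * Pm)" "j < dim_col (Am * Pm)"
    then have i: "i < n" and j: "j < n" using carr by auto
    have "(deriv ^^ i) (fs ! j) x = (\<Sum>l\<le>i. AA i l x * poly ((pderiv ^^ l) (UU (e j))) c)"
      using fsj[OF j] main_deriv c_def by simp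
    also have "\<dots> = (\<Sum>l<n. AA i l x * poly ((pderiv ^^ l) (UU (e j))) c)"
      by (rule sum.mono_neutral_left) (use i AA_zero in auto)
    also have "\<dots> = (Am * Pm) $$ (i, j)"
      using i j by (simp add: Am_def Pm_def scalar_prod_def atLeast0LessThan)
    finally show "mat n n (\<lambda>(i, j). (deriv ^^ i) (fs ! j) x) $$ (i, j) = (Am * Pm) $$ (i, j)"
      using i j by simp
  qed (use carr in auto)
  have einj: "inj_on e {..<n}" unfolding e_def inj_on_def by auto
  have Pm: "Pm = Em * Cm"
  proof (rule eq_matI)
    fix l j assume lj: "l < dim_row (Em * Cm)" "j < dim_col (Em * Cm)"
    then have l: "l < n" and j: "j < n" using carr by auto
    define g where "g k = coeff (UU (e j)) k * poly ((pderiv ^^ l) (monom 1 k)) c" for k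
    have ej: "e j \<le> n" unfolding e_def by auto
    have deg: "degree (UU (e j)) \<le> n"
      by (rule degree_le) (use UU_coeff ej in auto)
    have "Pm $$ (l, j) = (\<Sum>k\<le>n. g k)"
      using l j poly_higher_pderiv_expand[OF deg] by (simp add: Pm_def g_def)
    also have "\<dots> = sum g (e ` {..<n})"
    proof (rule sum.mono_neutral_right)
      show "e ` {..<n} \<subseteq> {..n}" unfolding e_def by auto
      show "\<forall>k\<in>{..n} - e ` {..<n}. g k = 0"
      proof
        fix k assume k: "k \<in> {..n} - e ` {..<n}"
        have "k = n - 1"
        proof (rule ccontr)
          assume "k \<noteq> n - 1"
          then have a: "k = e (if k = n then n - 1 else k)" and b: "(if k = n then n - 1 else k) < n"
            using k n unfolding e_def by auto
          then have "k \<in> e ` {..<n}" by blast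
          then show False using k by auto
        qed
        have "coeff (UU (e j)) k = 0"
        proof (cases "e j < n - 1")
          case True then show ?thesis using UU_coeff \<open>k = n - 1\<close> by auto
        next
          case False
          then have "e j = n" unfolding e_def by (auto split: if_splits)
          moreover have "odd (n + (n - 1))" using n by presburger
          ultimately show ?thesis using UU_coeff \<open>k = n - 1\<close> by auto
        qed
        then show "g k = 0" by (simp add: g_def)
      qed
    qed auto
    also have "\<dots> = (\<Sum>m<n. g (e m))" by (simp add: sum.reindex[OF einj])
    also have "\<dots> = (Em * Cm) $$ (l, j)"
      using l j by (simp add: Em_def Cm_def g_def scalar_prod_def atLeast0LessThan mult.commute)
    finally show "Pm $$ (l, j) = (Em * Cm) $$ (l, j)" .
  qed (use carr in auto)
  have dA: "det Am = (\<Prod>i<n. sin x * (- sin x) ^ i)"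
  proof -
    have "det Am = prod_list (diag_mat Am)"
      by (rule det_lower_triangular[OF _ carr(1)]) (auto simp: Am_def AA_zero)
    also have "\<dots> = (\<Prod>i<n. sin x * (- sin x) ^ i)"
      unfolding prod_list_diag_prod using carr by (simp add: Am_def AA_diag atLeast0LessThan)
    finally show ?thesis .
  qed
  have dE: "det Em = (\<Prod>m<n. fact (e m) / fact (e m - m) * cos x ^ (e m - m))"
  proof -
    have "det Em = prod_list (diag_mat Em)"
      by (rule det_upper_triangular[OF _ carr(3)])
         (auto simp: upper_triangular_def Em_def higher_pderiv_monom1 e_def)
    also have "\<dots> = (\<Prod>m<n. fact (e m) / fact (e m - m) * cos x ^ (e m - m))"
      unfolding prod_list_diag_prod using carr
      by (auto simp: Em_def atLeast0LessThan higher_pderiv_monom1 poly_monom c_def e_def intro!: prod.cong)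
    finally show ?thesis .
  qed
  have dC: "det Cm = (\<Prod>j<n. 2 ^ e j)"
  proof -
    have "det Cm = prod_list (diag_mat Cm)"
    proof (rule det_upper_triangular[OF _ carr(4)])
      show "upper_triangular Cm"
        unfolding upper_triangular_def
      proof (intro allI impI)
        fix m j assume "m < dim_row Cm" "j < m"
        then have "m < n" "j < m" using carr by auto
        then have "e j < e m" unfolding e_def by auto
        then show "Cm $$ (m, j) = 0" using \<open>m < n\<close> \<open>j < m\<close> UU_coeff by (simp add: Cm_def)
      qed
    qed
    also have "\<dots> = (\<Prod>j<n. 2 ^ e j)"
      unfolding prod_list_diag_prod using carr
      by (auto simp: Cm_def atLeast0LessThan UU_coeff intro!: prod.cong)
    finally show ?thesis .
  qed
  have "Wr fs x = det (Am * (Em * Cm))"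
    unfolding Wr_def len M Pm ..
  also have "\<dots> = det Am * (det Em * det Cm)"
    using carr by (simp add: det_mult[of _ n] mult_carrier_mat)
  finally show ?thesis unfolding fs_def dA dE dC by simp
qed



lemma final_arith:
  fixes s c :: real and k :: nat
  defines "n \<equiv> Suc (Suc k)"
  defines "e \<equiv> (\<lambda>m. if m < n - 1 then m else n)"
  shows "(\<Prod>i<n. s * (- s) ^ i) * (\<Prod>m<n. fact (e m) / fact (e m - m) * c ^ (e m - m)) * (\<Prod>j<n. 2 ^ e j)
     = (-2) ^ (n * (n - 1) div 2) * s ^ (n * (n + 1) div 2) * barnesG_succ n * (2 * real n) * c"
proof -
  define S where "S = (\<Sum>m<Suc k. m)"
  define T where "T = (\<Sum>i<n. i)"
  define PF where "PF = (\<Prod>m<Suc k. fact m :: real)"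
  have TS: "T = S + Suc k" unfolding T_def S_def n_def by simp
  have T1: "n * (n - 1) div 2 = T" unfolding T_def sum_lessThan_id ..
  have T2: "n * (n + 1) div 2 = T + n"
  proof -
    have "n * (n + 1) = n * (n - 1) + 2 * n" unfolding n_def by (simp add: algebra_simps)
    then show ?thesis using T1 by simp
  qed
  have p1: "(\<Prod>i<n. s * (- s) ^ i) = s ^ n * (- s) ^ T"
    unfolding T_def by (simp add: prod.distrib power_sum)
  have em: "m < Suc k \<Longrightarrow> e m = m" for m unfolding e_def n_def by simp
  have eS: "e (Suc k) = n" unfolding e_def n_def by simp
  have p2: "(\<Prod>m<n. fact (e m) / fact (e m - m) * c ^ (e m - m)) = PF * (fact (Suc (Suc k)) * c)"
  proof -
    have "(\<Prod>m<n. fact (e m) / fact (e m - m) * c ^ (e m - m))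
       = (\<Prod>m<Suc k. fact (e m) / fact (e m - m) * c ^ (e m - m)) * (fact (e (Suc k)) / fact (e (Suc k) - Suc k) * c ^ (e (Suc k) - Suc k))"
      unfolding n_def by (simp only: prod.lessThan_Suc)
    also have "(\<Prod>m<Suc k. fact (e m) / fact (e m - m) * c ^ (e m - m)) = PF"
      unfolding PF_def by (rule prod.cong) (simp_all add: em)
    also have "fact (e (Suc k)) / fact (e (Suc k) - Suc k) * c ^ (e (Suc k) - Suc k) = fact (Suc (Suc k)) * c"
      unfolding eS n_def by simp
    finally show ?thesis .
  qed
  have p3: "(\<Prod>j<n. (2::real) ^ e j) = 2 ^ S * 2 ^ Suc (Suc k)"
  proof -
    have "(\<Prod>j<n. (2::real) ^ e j) = (\<Prod>j<Suc k. 2 ^ e j) * 2 ^ e (Suc k)"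
      unfolding n_def by (simp only: prod.lessThan_Suc)
    also have "(\<Prod>j<Suc k. (2::real) ^ e j) = 2 ^ S"
      unfolding S_def power_sum by (rule prod.cong) (simp_all add: em)
    finally show ?thesis unfolding eS n_def by simp
  qed
  have G: "barnesG_succ n = PF * fact (Suc k)"
    unfolding barnesG_succ_def PF_def n_def by (simp only: prod.lessThan_Suc)
  have f2: "fact (Suc (Suc k)) = real (Suc (Suc k)) * fact (Suc k)"
    by (simp only: fact_Suc of_nat_mult of_nat_fact)
  have tp: "(2::real) ^ Suc (Suc k) = 2 * 2 ^ Suc k" by simp
  show ?thesis
    unfolding p1 p2 p3 G T1 T2 TS f2
    unfolding n_def power_minus[of s] power_minus[of "2::real"] power_add tp
    by (simp only: mult_ac)
qed


theorem lemma1: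
  fixes n :: nat and x :: real
  assumes "n \<ge> 1"
  shows "W1 n x = (-2) ^ (n * (n - 1) div 2) * sin x ^ (n * (n + 1) div 2)
                  * barnesG_succ n * (2 * real n) * cos x"
proof (cases "n = 1")
  case True
  then show ?thesis by (simp add: W1_def barnesG_succ_def sin_double)
next
  case False
  then have n2: "n \<ge> 2" using assms by simp
  define k where "k = n - 2"
  have nk: "n = Suc (Suc k)" using n2 unfolding k_def by simp
  have "W1 n x = Wr (map (\<lambda>k. (\<lambda>t. sin (real k * t))) ([1..<n] @ [n + 1])) x"
    using False by (simp add: W1_def)
  also have "\<dots> = (\<Prod>i<n. sin x * (- sin x) ^ i) * (\<Prod>m<n. fact (if m < n - 1 then m else n) / fact ((if m < n - 1 then m else n) - m) * cos x ^ ((if m < n - 1 then m else n) - m)) * (\<Prod>j<n. 2 ^ (if j < n - 1 then j else n))"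
    by (rule deriv_mat_factor[OF n2])
  also have "\<dots> = (-2) ^ (n * (n - 1) div 2) * sin x ^ (n * (n + 1) div 2)
                  * barnesG_succ n * (2 * real n) * cos x"
    unfolding nk by (rule final_arith)
  finally show ?thesis .
qed

end
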